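(* Every basis $B$ for $\mathbb{Z}$ can be written in the form $B=\{d_1,\,2d_2,\,2^2d_3,\,2^3d_4,\dots\}$, where all the integers $d_1,d_2,\dots$ are odd. Equivalently, for every $j\ge 0$, $B$ contains exactly one element $b$ such that $2^j$ divides $b$ and $2^{j+1}$ does not divide $b$, and $B$ contains no other elements.
   Context: A set of integers $B=\{b_1,b_2,\dots\}$, with the $b_i$ pairwise distinct, is a basis for $\mathbb{Z}$ if every $x\in\mathbb{Z}$ can be written in exactly one way as $x=\sum_{i\ge1}\epsilon_i b_i$ with every $\epsilon_i\in\{0,1\}$ and $\sum_i\epsilon_i<\infty$. *)

theory Defs
  imports Main
begin

text \<open>B is a basis for Z: every integer is, in exactly one way, a finite sum
 of distinct elements of B (choosing epsilon_i in {0,1} with finitely many 1s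
 is the same as choosing a finite subset of B, since the b_i are distinct).\<close>
definition is_basis_Z :: "int set \<Rightarrow> bool" where
  "is_basis_Z B \<longleftrightarrow> (\<forall>x::int. \<exists>!S. finite S \<and> S \<subseteq> B \<and> \<Sum>S = x)"

end

theory Submission
  imports Defs
begin

lemma per_nat: assumes "\<And>x. f (x + (p::int)) = (f x :: int)" shows "f (x + p * int n) = f x"
proof (induction n)
  case 0 then show ?case by simp
next
  case (Suc n)
  have "f (x + p * int (Suc n)) = f ((x + p * int n) + p)" by (simp add: algebra_simps)
  also have "\<dots> = f x" using assms Suc by simp
  finally show ?case .
qed

lemma per_int: assumes "\<And>x. f (x + (p::int)) = (f x :: int)" shows "f (x + p * (k::int)) = f x"
proof (cases "k \<ge> 0")
  case True then show ?thesis using per_nat[of f p x "nat k"] assms by simp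
next
  case False
  have "f ((x + p*k) + p * int (nat (-k))) = f (x + p*k)" using per_nat[of f p] assms by blast
  moreover have "(x + p*k) + p * int (nat (-k)) = x" using False by simp
  ultimately show ?thesis by metis
qed

lemma shift_sum: assumes "(N::int) > 0" "\<And>x. f (x + N) = (f x :: int)"
  shows "(\<Sum>x\<in>{0..<N}. f (x + c)) = (\<Sum>x\<in>{0..<N}. f x)"
proof (rule sum.reindex_bij_witness[where j = "\<lambda>x. (x + c) mod N" and i = "\<lambda>y. (y - c) mod N"])
  fix x assume x: "x \<in> {0..<N::int}"
  show "(((x + c) mod N) - c) mod N = x" using x by (simp add: mod_diff_left_eq)
  show "(x + c) mod N \<in> {0..<N}" using assms by simp
  show "((x - c) mod N + c) mod N = x" using x by (simp add: mod_add_left_eq)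
  show "(x - c) mod N \<in> {0..<N}" using assms by simp
  have "f ((x + c) mod N + N * ((x + c) div N)) = f ((x + c) mod N)"
    using per_int[of f N] assms(2) by blast
  then show "f ((x + c) mod N) = f (x + c)" by (metis mod_mult_div_eq)
qed

lemma odd_unique:
  assumes basis: "is_basis_Z B" and aB: "a \<in> B" and bB: "b \<in> B" and oa: "odd a" and ob: "odd b"
  shows "a = b"
proof (rule ccontr)
  assume ne: "a \<noteq> b"
  define C where "C = B - {a,b}"
  define R where "R = {x. \<exists>S. finite S \<and> S \<subseteq> C \<and> \<Sum>S = x}"
  define r where "r x = (if x \<in> R then 1 else 0::int)" for x
  define mk where "mk S p q = (if p then insert a else id) ((if q then insert b else id) S)" for S p q
  define sh where "sh p q = (if p then a else 0) + (if q then b else 0)" for p q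
  have rep: "\<And>x. \<exists>!T. finite T \<and> T \<subseteq> B \<and> \<Sum>T = x" using basis unfolding is_basis_Z_def by simp
  have mk_props: "finite (mk S p q) \<and> mk S p q \<subseteq> B \<and> \<Sum>(mk S p q) = \<Sum>S + sh p q"
    if "finite S" "S \<subseteq> C" for S p q
    using that ne aB bB unfolding mk_def sh_def C_def
    by (cases p; cases q) (auto simp: sum.insert_if)
  have mk_inj: "p1 = p2 \<and> q1 = q2"
    if "mk S1 p1 q1 = mk S2 p2 q2" "S1 \<subseteq> C" "S2 \<subseteq> C" for S1 S2 p1 p2 q1 q2
  proof -
    have "a \<in> mk S1 p1 q1 \<longleftrightarrow> p1" "a \<in> mk S2 p2 q2 \<longleftrightarrow> p2"
         "b \<in> mk S1 p1 q1 \<longleftrightarrow> q1" "b \<in> mk S2 p2 q2 \<longleftrightarrow> q2"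
      using that ne unfolding mk_def C_def by (cases p1; cases q1; cases p2; cases q2; auto)+
    then show ?thesis using that(1) by simp
  qed
  have Qu: "p1 = p2 \<and> q1 = q2" if "x - sh p1 q1 \<in> R" "x - sh p2 q2 \<in> R" for x p1 q1 p2 q2
  proof -
    have "\<exists>S. finite S \<and> S \<subseteq> C \<and> \<Sum>S = x - sh p1 q1" using that(1) by (simp add: R_def)
    then obtain S1 where S1: "finite S1" "S1 \<subseteq> C" "\<Sum>S1 = x - sh p1 q1" by blast
    have "\<exists>S. finite S \<and> S \<subseteq> C \<and> \<Sum>S = x - sh p2 q2" using that(2) by (simp add: R_def)
    then obtain S2 where S2: "finite S2" "S2 \<subseteq> C" "\<Sum>S2 = x - sh p2 q2" by blast
    have "mk S1 p1 q1 = mk S2 p2 q2"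
      using rep[of x] mk_props[OF S1(1,2), of p1 q1] mk_props[OF S2(1,2), of p2 q2] S1(3) S2(3) by auto
    then show ?thesis using mk_inj S1(2) S2(2) by metis
  qed
  have Qe: "\<exists>p q. x - sh p q \<in> R" for x
  proof -
    obtain T where T: "finite T" "T \<subseteq> B" "\<Sum>T = x" using rep[of x] by blast
    define S where "S = T - {a,b}"
    have S: "finite S" "S \<subseteq> C" using T unfolding S_def C_def by auto
    have "T = mk S (a \<in> T) (b \<in> T)" unfolding mk_def S_def by auto
    then have "\<Sum>S = x - sh (a \<in> T) (b \<in> T)" using mk_props[OF S, of "a \<in> T" "b \<in> T"] T(3) by simp
    then show ?thesis using S unfolding R_def by blast
  qed
  have K: "r x + r (x - a) + r (x - b) + r (x - a - b) = 1" for x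
  proof -
    obtain p0 q0 where pq: "x - sh p0 q0 \<in> R" using Qe by blast
    have all: "(x - sh p q \<in> R) = (p = p0 \<and> q = q0)" for p q
      using Qu[OF _ pq, of p q] pq by blast
    have "x - sh False False = x" "x - sh True False = x - a" "x - sh False True = x - b"
         "x - sh True True = x - a - b" unfolding sh_def by simp_all
    then show ?thesis using all[of False False] all[of True False] all[of False True] all[of True True]
      unfolding r_def by (cases p0; cases q0) auto
  qed
  have r01: "r x = 0 \<or> r x = 1" for x unfolding r_def by simp
  define u where "u x = r x + r (x - b)" for x
  define v where "v x = r x + r (x - a)" for x
  have uK: "u x + u (x - a) = 1" for x using K[of x] unfolding u_def by (simp add: algebra_simps)
  have vK: "v x + v (x - b) = 1" for x using K[of x] unfolding v_def by (simp add: algebra_simps)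
  have uper: "u (x + 2*a) = u x" for x
  proof -
    have "u (x + 2*a) + u (x + a) = 1" using uK[of "x + 2*a"] by (simp add: algebra_simps)
    moreover have "u (x + a) + u x = 1" using uK[of "x + a"] by simp
    ultimately show ?thesis by simp
  qed
  have vper: "v (x + 2*b) = v x" for x
  proof -
    have "v (x + 2*b) + v (x + b) = 1" using vK[of "x + 2*b"] by (simp add: algebra_simps)
    moreover have "v (x + b) + v x = 1" using vK[of "x + b"] by simp
    ultimately show ?thesis by simp
  qed
  have ruv: "r x = u x * v x" for x
    using K[of x] r01[of x] r01[of "x-a"] r01[of "x-b"] r01[of "x-a-b"] unfolding u_def v_def
    by auto
  define N where "N = 2 * \<bar>a\<bar> * \<bar>b\<bar>"
  have Npos: "N > 0" using oa ob unfolding N_def by (auto intro!: mult_pos_pos)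
  obtain k1 where k1: "N = 2*a*k1" unfolding N_def by (metis dvd_abs_iff dvd_refl dvd_def mult.assoc)
  obtain k2 where k2: "N = 2*b*k2" unfolding N_def by (metis dvd_abs_iff dvd_refl dvd_def mult.assoc mult.commute mult.left_commute)
  have rper: "r (x + N) = r x" for x
  proof -
    have "u (x + N) = u x" using per_int[of u "2*a" x k1] uper k1 by (simp add: mult.assoc)
    moreover have "v (x + N) = v x" using per_int[of v "2*b" x k2] vper k2 by (simp add: mult.assoc)
    ultimately show ?thesis using ruv by simp
  qed
  have "(\<Sum>x\<in>{0..<N}. r x + r (x - a) + r (x - b) + r (x - a - b)) = (\<Sum>x\<in>{0..<N}. 1)"
    using K by simp
  also have "\<dots> = N" using Npos by simp
  finally have tot: "(\<Sum>x\<in>{0..<N}. r x + r (x - a) + r (x - b) + r (x - a - b)) = N" .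
  have s1: "(\<Sum>x\<in>{0..<N}. r (x - a)) = (\<Sum>x\<in>{0..<N}. r x)"
    using shift_sum[of N r "-a"] Npos rper by simp
  have s2: "(\<Sum>x\<in>{0..<N}. r (x - b)) = (\<Sum>x\<in>{0..<N}. r x)"
    using shift_sum[of N r "-b"] Npos rper by simp
  have s3: "(\<Sum>x\<in>{0..<N}. r (x - a - b)) = (\<Sum>x\<in>{0..<N}. r x)"
    using shift_sum[of N r "-a-b"] Npos rper by (simp add: algebra_simps)
  have "4 * (\<Sum>x\<in>{0..<N}. r x) = N"
    using tot s1 s2 s3 by (simp add: sum.distrib)
  moreover have "N = 2 * (\<bar>a\<bar> * \<bar>b\<bar>)" by (simp add: N_def)
  ultimately have "\<bar>a\<bar> * \<bar>b\<bar> = 2 * (\<Sum>x\<in>{0..<N}. r x)" by linarith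
  then have "even (\<bar>a\<bar> * \<bar>b\<bar>)" by simp
  then show False using oa ob by (simp add: abs_mult[symmetric])
qed


lemma basis_rep: "is_basis_Z B \<Longrightarrow> \<exists>!T. finite T \<and> T \<subseteq> B \<and> \<Sum>T = x"
  unfolding is_basis_Z_def by simp

lemma zero_notin: assumes "is_basis_Z B" shows "0 \<notin> B"
proof
  assume "0 \<in> B"
  then have "finite {} \<and> {} \<subseteq> B \<and> \<Sum>{} = (0::int)" "finite {0} \<and> {0} \<subseteq> B \<and> \<Sum>{0} = (0::int)" by auto
  then show False using basis_rep[OF assms, of 0] by (metis insert_not_empty)
qed

lemma odd_ex: assumes "is_basis_Z B" shows "\<exists>a\<in>B. odd a"
proof (rule ccontr)
  assume "\<not> (\<exists>a\<in>B. odd a)"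
  then have ev: "\<forall>a\<in>B. even a" by blast
  obtain T where T: "finite T" "T \<subseteq> B" "\<Sum>T = (1::int)" using basis_rep[OF assms, of 1] by blast
  have "even (\<Sum>T)" using T ev by (intro dvd_sum) auto
  then show False using T by simp
qed

lemma halve: assumes basis: "is_basis_Z B" shows "is_basis_Z {c. 2*c \<in> B}"
  unfolding is_basis_Z_def
proof
  fix x :: int
  obtain a where a: "a \<in> B" "odd a" using odd_ex[OF basis] by blast
  have evB: "even c" if "c \<in> B" "c \<noteq> a" for c using odd_unique[OF basis a(1) that(1) a(2)] that by blast
  obtain T where T: "finite T" "T \<subseteq> B" "\<Sum>T = 2*x" using basis_rep[OF basis, of "2*x"] by blast
  have aT: "a \<notin> T"
  proof
    assume "a \<in> T"
    then have "\<Sum>T = a + \<Sum>(T - {a})" using T(1) by (simp add: sum.remove)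
    moreover have "even (\<Sum>(T - {a}))" using T evB by (intro dvd_sum) auto
    ultimately have "odd (\<Sum>T)" using a(2) by simp
    then show False using T(3) by simp
  qed
  have evT: "even t" if "t \<in> T" for t using evB T(2) aT that by blast
  define S where "S = {c. 2*c \<in> T}"
  have TS: "T = (\<lambda>c. 2*c) ` S" unfolding S_def using evT by (auto elim!: evenE)
  have inj: "inj ((\<lambda>c. 2*c) :: int \<Rightarrow> int)" by (auto simp: inj_def)
  have fS: "finite S" using T(1) TS inj by (metis finite_imageD inj_on_subset subset_UNIV)
  have "\<Sum>T = 2 * \<Sum>S" unfolding TS by (simp add: sum.reindex[OF inj_on_subset[OF inj]] sum_distrib_left)
  then have sS: "\<Sum>S = x" using T(3) by simp
  have SB: "S \<subseteq> {c. 2*c \<in> B}" unfolding S_def using T(2) by auto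
  show "\<exists>!S. finite S \<and> S \<subseteq> {c. 2*c \<in> B} \<and> \<Sum>S = x"
  proof (rule ex1I[of _ S])
    show "finite S \<and> S \<subseteq> {c. 2*c \<in> B} \<and> \<Sum>S = x" using fS SB sS by blast
  next
    fix S' assume S': "finite S' \<and> S' \<subseteq> {c. 2*c \<in> B} \<and> \<Sum>S' = x"
    have "\<Sum>((\<lambda>c. 2*c) ` S') = 2 * \<Sum>S'" by (simp add: sum.reindex[OF inj_on_subset[OF inj]] sum_distrib_left)
    then have "\<Sum>((\<lambda>c. 2*c) ` S') = 2*x" using S' by simp
    moreover have "finite ((\<lambda>c. 2*c) ` S')" "(\<lambda>c. 2*c) ` S' \<subseteq> B" using S' by auto
    ultimately have "(\<lambda>c. 2*c) ` S' = T" using T basis_rep[OF basis, of "2*x"] by blast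
    then show "S' = S" using TS inj by (simp add: inj_image_eq_iff)
  qed
qed

lemma dvd2: "2 ^ (k + 1) dvd 2 * (y::int) \<longleftrightarrow> 2 ^ k dvd y"
proof -
  have "(2::int) ^ (k + 1) = 2 * 2 ^ k" by simp
  then show ?thesis using dvd_times_left_cancel_iff[of "2::int" "2^k" y] by simp
qed

lemma val_unique: "is_basis_Z B \<Longrightarrow> \<exists>!b. b \<in> B \<and> 2 ^ j dvd b \<and> \<not> 2 ^ (j + 1) dvd b"
proof (induction j arbitrary: B)
  case 0
  obtain a where a: "a \<in> B" "odd a" using odd_ex[OF 0] by blast
  show ?case
  proof (rule ex1I[of _ a])
    show "a \<in> B \<and> 2 ^ 0 dvd a \<and> \<not> 2 ^ (0 + 1) dvd a" using a by simp
  next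
    fix b assume "b \<in> B \<and> 2 ^ 0 dvd b \<and> \<not> 2 ^ (0 + 1) dvd b"
    then have "b \<in> B" "odd b" by simp_all
    then show "b = a" using odd_unique[OF 0 _ a(1) _ a(2)] by blast
  qed
next
  case (Suc j)
  have B2: "is_basis_Z {c. 2*c \<in> B}" using halve[OF Suc.prems] .
  obtain c where c: "2*c \<in> B" "2^j dvd c" "\<not> 2^(j+1) dvd c"
    and cu: "\<And>c'. 2*c' \<in> B \<Longrightarrow> 2^j dvd c' \<Longrightarrow> \<not> 2^(j+1) dvd c' \<Longrightarrow> c' = c"
  proof -
    from Suc.IH[OF B2] obtain c where c: "c \<in> {c. 2*c \<in> B} \<and> 2^j dvd c \<and> \<not> 2^(j+1) dvd c"
      and u: "\<And>y. y \<in> {c. 2*c \<in> B} \<and> 2^j dvd y \<and> \<not> 2^(j+1) dvd y \<Longrightarrow> y = c"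
      by (rule ex1E) blast
    have "2*c \<in> B" "2^j dvd c" "\<not> 2^(j+1) dvd c" using c by auto
    moreover have "c' = c" if "2*c' \<in> B" "2^j dvd c'" "\<not> 2^(j+1) dvd c'" for c'
      using u[of c'] that by blast
    ultimately show ?thesis by (rule that)
  qed
  have e1: "2 ^ (Suc j + 1) dvd 2*y \<longleftrightarrow> 2^(j+1) dvd y" for y :: int using dvd2[of "j+1" y] by simp
  have e2: "2 ^ (Suc j) dvd 2*y \<longleftrightarrow> 2^j dvd y" for y :: int using dvd2[of "j" y] by simp
  show ?case
  proof (rule ex1I[of _ "2*c"])
    show "2*c \<in> B \<and> 2 ^ Suc j dvd 2*c \<and> \<not> 2 ^ (Suc j + 1) dvd 2*c" using c e1 e2 by blast
  next
    fix b assume b: "b \<in> B \<and> 2 ^ Suc j dvd b \<and> \<not> 2 ^ (Suc j + 1) dvd b"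
    have "(2::int) dvd 2 ^ Suc j" by simp
    then have "even b" using b by (meson dvd_trans)
    then obtain c' where c': "b = 2*c'" by (auto elim: evenE)
    have h1: "2*c' \<in> B" using b c' e1 e2 by blast
    have h2: "2^j dvd c'" using b c' e1 e2 by blast
    have h3: "\<not> 2^(j+1) dvd c'" using b c' e1 e2 by blast
    have "c' = c" using cu[OF h1 h2 h3] .
    then show "b = 2*c" using c' by simp
  qed
qed

lemma val_ex: "(x::int) \<noteq> 0 \<Longrightarrow> \<exists>j::nat. 2 ^ j dvd x \<and> \<not> 2 ^ (j + 1) dvd x"
proof (induction "nat \<bar>x\<bar>" arbitrary: x rule: less_induct)
  case less
  show ?case
  proof (cases "odd x")
    case True then show ?thesis by (intro exI[of _ 0]) simp
  next
    case False
    then obtain y where y: "x = 2*y" by (auto elim: evenE)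
    have "y \<noteq> 0" "nat \<bar>y\<bar> < nat \<bar>x\<bar>" using less.prems y by auto
    then obtain j where "2 ^ j dvd y" "\<not> 2 ^ (j + 1) dvd y" using less.hyps by blast
    moreover have "2 ^ (Suc j + 1) = (2::int) * 2^(j+1)" by simp
    moreover have "((2::int) * 2^(j+1) dvd 2*y) = (2^(j+1) dvd y)" by (rule dvd_times_left_cancel_iff) simp
    ultimately show ?thesis using y by (intro exI[of _ "Suc j"]) auto
  qed
qed

theorem mainTheorem8:
  fixes B :: "int set"
  assumes "is_basis_Z B"
  shows "(\<exists>d :: nat \<Rightarrow> int. (\<forall>i. odd (d i)) \<and> B = range (\<lambda>i. 2 ^ i * d i))
       \<and> (\<forall>j::nat. \<exists>!b. b \<in> B \<and> 2 ^ j dvd b \<and> \<not> 2 ^ (j + 1) dvd b)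
       \<and> (\<forall>b\<in>B. \<exists>j::nat. 2 ^ j dvd b \<and> \<not> 2 ^ (j + 1) dvd b)"
proof (intro conjI)
  show U: "\<forall>j::nat. \<exists>!b. b \<in> B \<and> 2 ^ j dvd b \<and> \<not> 2 ^ (j + 1) dvd b"
    using val_unique[OF assms] by blast
  show V: "\<forall>b\<in>B. \<exists>j::nat. 2 ^ j dvd b \<and> \<not> 2 ^ (j + 1) dvd b"
  proof
    fix b assume "b \<in> B"
    then have "b \<noteq> 0" using zero_notin[OF assms] by blast
    then show "\<exists>j::nat. 2 ^ j dvd b \<and> \<not> 2 ^ (j + 1) dvd b" by (rule val_ex)
  qed
  define e where "e i = (THE b. b \<in> B \<and> 2 ^ i dvd b \<and> \<not> 2 ^ (i + 1) dvd b)" for i :: nat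
  have e: "e i \<in> B \<and> 2 ^ i dvd e i \<and> \<not> 2 ^ (i + 1) dvd e i" for i
    unfolding e_def using U by (metis (no_types, lifting) theI')
  define d where "d i = e i div 2 ^ i" for i
  have ed: "e i = 2 ^ i * d i" for i using e[of i] unfolding d_def by simp
  have od: "odd (d i)" for i
  proof
    assume "even (d i)"
    then have "2 ^ (i+1) dvd e i" unfolding ed by (auto elim!: evenE)
    then show False using e by blast
  qed
  show "\<exists>d :: nat \<Rightarrow> int. (\<forall>i. odd (d i)) \<and> B = range (\<lambda>i. 2 ^ i * d i)"
  proof (intro exI conjI allI)
    show "odd (d i)" for i by (rule od)
    show "B = range (\<lambda>i. 2 ^ i * d i)"
    proof
      show "range (\<lambda>i. 2 ^ i * d i) \<subseteq> B" using e ed by auto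
      show "B \<subseteq> range (\<lambda>i. 2 ^ i * d i)"
      proof
        fix b assume b: "b \<in> B"
        then obtain j where j: "2 ^ j dvd b" "\<not> 2 ^ (j + 1) dvd b" using V by blast
        have "e j = b" unfolding e_def by (rule the1_equality) (use U b j in auto)
        then show "b \<in> range (\<lambda>i. 2 ^ i * d i)" using ed by auto
      qed
    qed
  qed
qed

end
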